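(* Let $k$ be a field, $V$ a $k$-vector space, and $\varphi\in\operatorname{End}_k(V)$ a finite potent endomorphism with index $i(\varphi)=r$ and AST-decomposition $V=W_\varphi\oplus U_\varphi$. Fix a Jordan basis of $U_\varphi$ induced by $\varphi|_{U_\varphi}$, given by pairwise disjoint index sets $S_1,\dots,S_r$, $\overline S=S_1\cup\dots\cup S_r$, and vectors $v_{s}\in U_\varphi$ ($s\in\overline S$) such that, writing $s_h$ for an element of $S_h$, one has $\varphi^{h}(v_{s_h})=0$ and $\bigcup_{h=1}^r\bigcup_{s_h\in S_h}\{v_{s_h},\varphi(v_{s_h}),\dots,\varphi^{h-1}(v_{s_h})\}$ is a basis of $U_\varphi$. Then the generalized inverses $g\in\operatorname{End}_k(U_\varphi)$ of $\varphi|_{U_\varphi}$ are exactly the linear maps determined, for each $1\le h\le r$ and $s_h\in S_h$, by $$g(\varphi^i(v_{s_h}))=\begin{cases}\varphi^{i-1}(v_{s_h})+\sum_{s_t\in\overline S}\lambda^{i}_{s_h,s_t}\,\varphi^{t-1}(v_{s_t}) & \text{if } 1\le i\le h-1,\\ v_{s_h}' & \text{if } i=0,\end{cases}$$ where $v'_{s_h}\in U_\varphi$ are arbitrary vectors and $\lambda^{i}_{s_h,s_t}\in k$ are arbitrary scalars such that, for each $s_h$ and $i$, $\lambda^{i}_{s_h,s_t}=0$ for all but finitely many $s_t\in\overline S$ (here $t$ denotes the index with $s_t\in S_t$).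
   Context: An endomorphism $\varphi$ of a $k$-vector space $V$ is finite potent if $\varphi^n(V)$ is finite dimensional for some $n$. For such $\varphi$, the AST-decomposition is $V=U_\varphi\oplus W_\varphi$ where $U_\varphi=\{v\in V: \varphi^m(v)=0 \text{ for some } m\}$ and $W_\varphi=\{v\in V: p(\varphi)(v)=0 \text{ for some } p(x)\in k[x] \text{ coprime to } x\}$; both are $\varphi$-invariant, $\varphi|_{U_\varphi}$ is nilpotent, $W_\varphi$ is finite dimensional and $\varphi|_{W_\varphi}$ is an automorphism. The index $i(\varphi)$ is the nilpotency order of $\varphi|_{U_\varphi}$. A generalized inverse of an endomorphism $g_0$ of $U$ is an endomorphism $g$ of $U$ with $g_0\circ g\circ g_0=g_0$. *)

theory Defs
  imports Complex_Main
begin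

definition finite_potent :: "('a::field \<Rightarrow> 'v::ab_group_add \<Rightarrow> 'v) \<Rightarrow> ('v \<Rightarrow> 'v) \<Rightarrow> bool" where
  "finite_potent scale \<phi> \<longleftrightarrow> Vector_Spaces.linear scale scale \<phi> \<and>
     (\<exists>n B. finite B \<and> Modules.module.span scale B = range (\<phi> ^^ n))"

definition U_part :: "('v::zero \<Rightarrow> 'v) \<Rightarrow> 'v set" where
  "U_part \<phi> = {v. \<exists>m. (\<phi> ^^ m) v = 0}"

definition fp_index :: "('v::zero \<Rightarrow> 'v) \<Rightarrow> nat" where
  "fp_index \<phi> = (LEAST r. \<forall>v\<in>U_part \<phi>. (\<phi> ^^ r) v = 0)"

text \<open>g is an endomorphism of the subspace U (values of g outside U are irrelevant).\<close>
definition endo_on :: "('a::field \<Rightarrow> 'v::ab_group_add \<Rightarrow> 'v) \<Rightarrow> 'v set \<Rightarrow> ('v \<Rightarrow> 'v) \<Rightarrow> bool" where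
  "endo_on scale U g \<longleftrightarrow> g ` U \<subseteq> U \<and>
     (\<forall>x\<in>U. \<forall>y\<in>U. g (x + y) = g x + g y) \<and>
     (\<forall>c. \<forall>x\<in>U. g (scale c x) = scale c (g x))"

definition gen_inverse_on :: "'v set \<Rightarrow> ('v \<Rightarrow> 'v) \<Rightarrow> ('v \<Rightarrow> 'v) \<Rightarrow> bool" where
  "gen_inverse_on U g0 g \<longleftrightarrow> (\<forall>u\<in>U. g0 (g (g0 u)) = g0 u)"

end

theory Submission imports Defs begin

locale jb = vector_space scale for scale :: "'a::field \<Rightarrow> 'v::ab_group_add \<Rightarrow> 'v" +
  fixes \<phi> :: "'v \<Rightarrow> 'v" and r :: nat and S :: "nat \<Rightarrow> 'i set" and v :: "'i \<Rightarrow> 'v"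
  assumes lin: "Vector_Spaces.linear scale scale \<phi>"
    and disj: "\<forall>h\<in>{1..r}. \<forall>h'\<in>{1..r}. h \<noteq> h' \<longrightarrow> S h \<inter> S h' = {}"
    and vker: "\<forall>h\<in>{1..r}. \<forall>s\<in>S h. (\<phi> ^^ h) (v s) = 0"
    and inj: "inj_on (\<lambda>(s, j). (\<phi> ^^ j) (v s)) {(s, j). \<exists>h\<in>{1..r}. s \<in> S h \<and> j < h}"
    and indep: "independent {(\<phi> ^^ j) (v s) | s j. \<exists>h\<in>{1..r}. s \<in> S h \<and> j < h}"
    and spans: "span {(\<phi> ^^ j) (v s) | s j. \<exists>h\<in>{1..r}. s \<in> S h \<and> j < h} = U_part \<phi>"
begin

sublocale L: Vector_Spaces.linear scale scale \<phi> by (rule lin)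

definition "B = {(\<phi> ^^ j) (v s) | s j. \<exists>h\<in>{1..r}. s \<in> S h \<and> j < h}"
definition "K = {(\<phi> ^^ (h - 1)) (v s) | s h. h\<in>{1..r} \<and> s \<in> S h}"

lemma injD: "h1 \<in> {1..r} \<Longrightarrow> s1 \<in> S h1 \<Longrightarrow> j1 < h1 \<Longrightarrow> h2 \<in> {1..r} \<Longrightarrow> s2 \<in> S h2 \<Longrightarrow> j2 < h2
  \<Longrightarrow> (\<phi> ^^ j1) (v s1) = (\<phi> ^^ j2) (v s2) \<Longrightarrow> s1 = s2 \<and> j1 = j2"
proof -
  assume a: "h1 \<in> {1..r}" "s1 \<in> S h1" "j1 < h1" "h2 \<in> {1..r}" "s2 \<in> S h2" "j2 < h2"
    "(\<phi> ^^ j1) (v s1) = (\<phi> ^^ j2) (v s2)"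
  have "(s1, j1) \<in> {(s, j). \<exists>h\<in>{1..r}. s \<in> S h \<and> j < h}" "(s2, j2) \<in> {(s, j). \<exists>h\<in>{1..r}. s \<in> S h \<and> j < h}"
    using a by blast+
  from inj_onD[OF inj _ this] a show ?thesis by auto
qed

lemma phi_pow: "\<phi> ((\<phi> ^^ n) x) = (\<phi> ^^ Suc n) x" by simp

lemma K_zero: "x \<in> K \<Longrightarrow> \<phi> x = 0"
proof -
  assume "x \<in> K"
  then obtain h s where x: "x = (\<phi> ^^ (h - 1)) (v s)" "h \<in> {1..r}" "s \<in> S h" unfolding K_def by blast
  then have "Suc (h - 1) = h" by auto
  then show ?thesis using x vker phi_pow[of "h - 1" "v s"] by auto
qed

lemma K_B: "K \<subseteq> B" unfolding K_def B_def by force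

lemma U_eq: "U_part \<phi> = span B" using spans B_def by simp

lemma U_inv: "u \<in> U_part \<phi> \<Longrightarrow> \<phi> u \<in> U_part \<phi>"
  unfolding U_part_def by (auto simp: funpow_swap1[symmetric]) (metis L.zero)

lemma ker_span: assumes u: "u \<in> span B" and z: "\<phi> u = 0" shows "u \<in> span K"
proof -
  define N where "N = B - K"
  have "B = K \<union> N" using K_B N_def by auto
  with u obtain x y where xy: "u = x + y" "x \<in> span K" "y \<in> span N" using span_Un by auto
  have "\<phi> x = 0" using L.eq_0_on_span[OF K_zero xy(2)] by auto
  with z xy have py: "\<phi> y = 0" by (simp add: L.add)
  have NB: "\<phi> ` N \<subseteq> B"
  proof
    fix b assume "b \<in> \<phi> ` N"
    then obtain x where x: "x \<in> N" "b = \<phi> x" by auto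
    then obtain s j h where sj: "x = (\<phi> ^^ j) (v s)" "h \<in> {1..r}" "s \<in> S h" "j < h" "x \<notin> K"
      unfolding N_def B_def by auto
    have "j \<noteq> h - 1" using sj unfolding K_def by auto
    then have "Suc j < h" using sj by auto
    moreover have "b = (\<phi> ^^ Suc j) (v s)" using sj x by simp
    ultimately show "b \<in> B" using sj unfolding B_def by blast
  qed
  have iN: "inj_on \<phi> N"
  proof
    fix x1 x2 assume "x1 \<in> N" "x2 \<in> N" and eq: "\<phi> x1 = \<phi> x2"
    then obtain s1 j1 h1 s2 j2 h2 where sj: "x1 = (\<phi> ^^ j1) (v s1)" "h1 \<in> {1..r}" "s1 \<in> S h1" "j1 < h1" "x1 \<notin> K"
      "x2 = (\<phi> ^^ j2) (v s2)" "h2 \<in> {1..r}" "s2 \<in> S h2" "j2 < h2" "x2 \<notin> K"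
      unfolding N_def B_def by blast
    have "j1 \<noteq> h1 - 1" "j2 \<noteq> h2 - 1" using sj unfolding K_def by auto
    then have "Suc j1 < h1" "Suc j2 < h2" using sj by auto
    moreover have "(\<phi> ^^ Suc j1) (v s1) = (\<phi> ^^ Suc j2) (v s2)" using eq sj by simp
    ultimately have "s1 = s2 \<and> Suc j1 = Suc j2" using injD sj by blast
    then show "x1 = x2" using sj by simp
  qed
  have "independent (\<phi> ` N)" using independent_mono[OF indep] NB B_def by simp
  then have "inj_on \<phi> (span N)" using L.inj_on_span_iff_independent_image iN by blast
  then have "y = 0" using py xy(3) span_zero L.zero by (metis inj_onD)
  then show ?thesis using xy by simp
qed

lemma rep: assumes u: "u \<in> span K"
  shows "\<exists>c. finite {t \<in> (\<Union>h'\<in>{1..r}. S h'). c t \<noteq> 0} \<and>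
     u = (\<Sum>t'\<in>{1..r}. \<Sum>t\<in>{t \<in> S t'. c t \<noteq> 0}. scale (c t) ((\<phi> ^^ (t' - 1)) (v t)))"
proof -
  obtain f where fin: "finite {b. f b \<noteq> 0}" and supp: "\<forall>b. f b \<noteq> 0 \<longrightarrow> b \<in> K"
    and ueq: "u = (\<Sum>b | f b \<noteq> 0. scale (f b) b)"
    using u unfolding span_explicit' by blast
  define w where "w h t = (\<phi> ^^ (h - 1)) (v t)" for h t
  define lev where "lev t = (THE h. h \<in> {1..r} \<and> t \<in> S h)" for t
  define c where "c t = f (w (lev t) t)" for t
  have levI: "lev t = h" if "h \<in> {1..r}" "t \<in> S h" for h t
    unfolding lev_def
  proof (rule the_equality)
    show "h \<in> {1..r} \<and> t \<in> S h" using that by simp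
    show "h' = h" if "h' \<in> {1..r} \<and> t \<in> S h'" for h' using that \<open>h \<in> {1..r}\<close> \<open>t \<in> S h\<close> disj by blast
  qed
  have winj: "h1 = h2 \<and> t1 = t2" if "h1 \<in> {1..r}" "t1 \<in> S h1" "h2 \<in> {1..r}" "t2 \<in> S h2" "w h1 t1 = w h2 t2" for h1 h2 t1 t2
  proof -
    have "t1 = t2 \<and> h1 - 1 = h2 - 1" using injD[of h1 t1 "h1 - 1" h2 t2 "h2 - 1"] that unfolding w_def by auto
    then show ?thesis using that by auto
  qed
  define A where "A h = {t \<in> S h. f (w h t) \<noteq> 0}" for h
  have cA: "{t \<in> S h. c t \<noteq> 0} = A h" if "h \<in> {1..r}" for h
    unfolding A_def c_def using levI[OF that] by auto
  have injA: "inj_on (w h) (A h)" if "h \<in> {1..r}" for h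
    using winj[OF that _ that] unfolding A_def inj_on_def by blast
  have imA: "w h ` A h \<subseteq> {b. f b \<noteq> 0}" for h unfolding A_def by auto
  have finA: "finite (A h)" if "h \<in> {1..r}" for h
    using finite_imageD[OF finite_subset[OF imA fin] injA[OF that]] .
  have "(\<Sum>t'\<in>{1..r}. \<Sum>t\<in>{t \<in> S t'. c t \<noteq> 0}. scale (c t) ((\<phi> ^^ (t' - 1)) (v t)))
      = (\<Sum>t'\<in>{1..r}. \<Sum>b\<in>w t' ` A t'. scale (f b) b)"
  proof (rule sum.cong[OF refl])
    fix h assume h: "h \<in> {1..r}"
    have "(\<Sum>b\<in>w h ` A h. scale (f b) b) = (\<Sum>t\<in>A h. scale (f (w h t)) (w h t))"
      by (rule sum.reindex[OF injA[OF h], unfolded comp_def])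
    also have "\<dots> = (\<Sum>t\<in>{t \<in> S h. c t \<noteq> 0}. scale (c t) ((\<phi> ^^ (h - 1)) (v t)))"
      unfolding cA[OF h] by (rule sum.cong[OF refl]) (auto simp: A_def c_def levI[OF h] w_def)
    finally show "(\<Sum>t\<in>{t \<in> S h. c t \<noteq> 0}. scale (c t) ((\<phi> ^^ (h - 1)) (v t))) = (\<Sum>b\<in>w h ` A h. scale (f b) b)" by simp
  qed
  also have "\<dots> = (\<Sum>b\<in>(\<Union>h\<in>{1..r}. w h ` A h). scale (f b) b)"
  proof (rule sum.UNION_disjoint[symmetric])
    show "finite {1..r}" by simp
    show "\<forall>h\<in>{1..r}. finite (w h ` A h)" using finA by blast
    show "\<forall>h\<in>{1..r}. \<forall>j\<in>{1..r}. h \<noteq> j \<longrightarrow> w h ` A h \<inter> w j ` A j = {}"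
      using winj unfolding A_def by blast
  qed
  also have "(\<Union>h\<in>{1..r}. w h ` A h) = {b. f b \<noteq> 0}"
  proof
    show "(\<Union>h\<in>{1..r}. w h ` A h) \<subseteq> {b. f b \<noteq> 0}" using imA by blast
    show "{b. f b \<noteq> 0} \<subseteq> (\<Union>h\<in>{1..r}. w h ` A h)"
    proof
      fix b assume b: "b \<in> {b. f b \<noteq> 0}"
      then have "b \<in> K" using supp by auto
      then obtain h s where hs: "b = w h s" "h \<in> {1..r}" "s \<in> S h" unfolding K_def w_def by blast
      then have "s \<in> A h" using b unfolding A_def by auto
      then show "b \<in> (\<Union>h\<in>{1..r}. w h ` A h)" using hs by blast
    qed
  qed
  finally have eq: "u = (\<Sum>t'\<in>{1..r}. \<Sum>t\<in>{t \<in> S t'. c t \<noteq> 0}. scale (c t) ((\<phi> ^^ (t' - 1)) (v t)))"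
    using ueq by simp
  have "{t \<in> (\<Union>h'\<in>{1..r}. S h'). c t \<noteq> 0} = (\<Union>h\<in>{1..r}. A h)"
    using cA by blast
  then have "finite {t \<in> (\<Union>h'\<in>{1..r}. S h'). c t \<noteq> 0}" using finA by simp
  then show ?thesis using eq by blast
qed

lemma sum_kill: "\<phi> (\<Sum>t'\<in>{1..r}. \<Sum>t\<in>{t \<in> S t'. P t}. scale (c t) ((\<phi> ^^ (t' - 1)) (v t))) = 0"
proof -
  have "\<phi> (scale (c t) ((\<phi> ^^ (t' - 1)) (v t))) = 0" if "t' \<in> {1..r}" "t \<in> S t'" for t t'
  proof -
    have "Suc (t' - 1) = t'" using that by auto
    then have "\<phi> ((\<phi> ^^ (t' - 1)) (v t)) = 0" using vker that phi_pow[of "t' - 1" "v t"] by auto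
    then show ?thesis by (simp add: L.scale)
  qed
  then show ?thesis by (simp add: L.sum)
qed

lemma g0: "endo_on scale (U_part \<phi>) g \<Longrightarrow> g 0 = 0"
  unfolding endo_on_def U_part_def
  by (metis (mono_tags, lifting) L.zero mem_Collect_eq scale_zero_left funpow_0)

lemma geninv:
  assumes e: "endo_on scale (U_part \<phi>) g"
    and f: "\<forall>h\<in>{1..r}. \<forall>s\<in>S h. \<forall>i\<in>{1..h-1}. g ((\<phi> ^^ i) (v s)) =
                 (\<phi> ^^ (i - 1)) (v s) +
                 (\<Sum>t'\<in>{1..r}. \<Sum>t\<in>{t \<in> S t'. lam i s t \<noteq> 0}.
                    scale (lam i s t) ((\<phi> ^^ (t' - 1)) (v t)))"
  shows "gen_inverse_on (U_part \<phi>) \<phi> g"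
proof -
  have g00: "g 0 = 0" using g0[OF e] .
  have ge: "g ` U_part \<phi> \<subseteq> U_part \<phi>" "\<forall>x\<in>U_part \<phi>. \<forall>y\<in>U_part \<phi>. g (x + y) = g x + g y"
    "\<forall>c. \<forall>x\<in>U_part \<phi>. g (scale c x) = scale c (g x)" using e unfolding endo_on_def by auto
  have base: "\<phi> (g (\<phi> x)) = \<phi> x" if xB0: "x \<in> B" for x
  proof -
    obtain s j h where sj: "x = (\<phi> ^^ j) (v s)" "h \<in> {1..r}" "s \<in> S h" "j < h"
      using xB0 unfolding B_def by blast
    show ?thesis
    proof (cases "Suc j = h")
      case True
      have "(\<phi> ^^ h) (v s) = 0" using sj vker by blast
      then have "\<phi> x = 0" using sj True by (metis phi_pow)
      then show ?thesis using g00 by simp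
    next
      case False
      then have i: "Suc j \<in> {1..h-1}" using sj by auto
      have px: "\<phi> x = (\<phi> ^^ Suc j) (v s)" using sj by simp
      have "g ((\<phi> ^^ Suc j) (v s)) = (\<phi> ^^ (Suc j - 1)) (v s) + (\<Sum>t'\<in>{1..r}. \<Sum>t\<in>{t \<in> S t'. lam (Suc j) s t \<noteq> 0}.
                    scale (lam (Suc j) s t) ((\<phi> ^^ (t' - 1)) (v t)))"
        using f sj(2,3) i by blast
      then have "g (\<phi> x) = (\<phi> ^^ j) (v s) + (\<Sum>t'\<in>{1..r}. \<Sum>t\<in>{t \<in> S t'. lam (Suc j) s t \<noteq> 0}.
                    scale (lam (Suc j) s t) ((\<phi> ^^ (t' - 1)) (v t)))"
        using px by simp
      then have "\<phi> (g (\<phi> x)) = \<phi> ((\<phi> ^^ j) (v s))" using sum_kill by (simp add: L.add)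
      then show ?thesis using sj by simp
    qed
  qed
  show ?thesis unfolding gen_inverse_on_def
  proof
    fix u assume "u \<in> U_part \<phi>"
    then have "u \<in> span B" using U_eq by simp
    then have "u \<in> span B \<and> \<phi> (g (\<phi> u)) = \<phi> u"
    proof (induction rule: span_induct_alt)
      case base
      then show ?case using g00 span_zero by simp
    next
      case (step c x y)
      have xB: "x \<in> span B" using step(1) span_base by auto
      have px: "\<phi> x \<in> U_part \<phi>" "\<phi> y \<in> U_part \<phi>" using U_inv U_eq xB step(2) by auto
      then have spx: "scale c (\<phi> x) \<in> U_part \<phi>" using U_eq span_scale by auto
      have "\<phi> (scale c x + y) = scale c (\<phi> x) + \<phi> y" by (simp add: L.add L.scale)
      then have "g (\<phi> (scale c x + y)) = scale c (g (\<phi> x)) + g (\<phi> y)" using ge px spx by simp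
      then have "\<phi> (g (\<phi> (scale c x + y))) = scale c (\<phi> x) + \<phi> y"
        using base[OF step(1)] step(2) by (simp add: L.add L.scale)
      then show ?case using step xB span_add span_scale by (simp add: L.add L.scale)
    qed
    then show "\<phi> (g (\<phi> u)) = \<phi> u" by simp
  qed
qed

end
theorem lemma3p10:
  fixes scale :: "'a::field \<Rightarrow> 'v::ab_group_add \<Rightarrow> 'v"
    and \<phi> :: "'v \<Rightarrow> 'v"
    and r :: nat
    and S :: "nat \<Rightarrow> 'i set"
    and v :: "'i \<Rightarrow> 'v"
  assumes vs: "vector_space scale"
    and fp: "finite_potent scale \<phi>"
    and idx: "fp_index \<phi> = r"
    and disj: "\<forall>h\<in>{1..r}. \<forall>h'\<in>{1..r}. h \<noteq> h' \<longrightarrow> S h \<inter> S h' = {}"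
    and vU: "\<forall>h\<in>{1..r}. \<forall>s\<in>S h. v s \<in> U_part \<phi>"
    and vker: "\<forall>h\<in>{1..r}. \<forall>s\<in>S h. (\<phi> ^^ h) (v s) = 0"
    and inj: "inj_on (\<lambda>(s, j). (\<phi> ^^ j) (v s)) {(s, j). \<exists>h\<in>{1..r}. s \<in> S h \<and> j < h}"
    and indep: "Modules.module.independent scale {(\<phi> ^^ j) (v s) | s j. \<exists>h\<in>{1..r}. s \<in> S h \<and> j < h}"
    and spans: "Modules.module.span scale {(\<phi> ^^ j) (v s) | s j. \<exists>h\<in>{1..r}. s \<in> S h \<and> j < h} = U_part \<phi>"
  shows
    "(\<forall>g. endo_on scale (U_part \<phi>) g \<longrightarrow>
       (gen_inverse_on (U_part \<phi>) \<phi> g \<longleftrightarrow>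
        (\<exists>(v' :: 'i \<Rightarrow> 'v) (lam :: nat \<Rightarrow> 'i \<Rightarrow> 'i \<Rightarrow> 'a).
           (\<forall>h\<in>{1..r}. \<forall>s\<in>S h. v' s \<in> U_part \<phi>) \<and>
           (\<forall>h\<in>{1..r}. \<forall>s\<in>S h. \<forall>i\<in>{1..h-1}.
              finite {t \<in> (\<Union>h'\<in>{1..r}. S h'). lam i s t \<noteq> 0}) \<and>
           (\<forall>h\<in>{1..r}. \<forall>s\<in>S h.
              g (v s) = v' s \<and>
              (\<forall>i\<in>{1..h-1}. g ((\<phi> ^^ i) (v s)) =
                 (\<phi> ^^ (i - 1)) (v s) +
                 (\<Sum>t'\<in>{1..r}. \<Sum>t\<in>{t \<in> S t'. lam i s t \<noteq> 0}.
                    scale (lam i s t) ((\<phi> ^^ (t' - 1)) (v t))))))))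
     \<and>
     (\<forall>(v' :: 'i \<Rightarrow> 'v) (lam :: nat \<Rightarrow> 'i \<Rightarrow> 'i \<Rightarrow> 'a).
        (\<forall>h\<in>{1..r}. \<forall>s\<in>S h. v' s \<in> U_part \<phi>) \<and>
        (\<forall>h\<in>{1..r}. \<forall>s\<in>S h. \<forall>i\<in>{1..h-1}.
           finite {t \<in> (\<Union>h'\<in>{1..r}. S h'). lam i s t \<noteq> 0}) \<longrightarrow>
        (\<exists>g. endo_on scale (U_part \<phi>) g \<and> gen_inverse_on (U_part \<phi>) \<phi> g \<and>
           (\<forall>h\<in>{1..r}. \<forall>s\<in>S h.
              g (v s) = v' s \<and>
              (\<forall>i\<in>{1..h-1}. g ((\<phi> ^^ i) (v s)) =
                 (\<phi> ^^ (i - 1)) (v s) +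
                 (\<Sum>t'\<in>{1..r}. \<Sum>t\<in>{t \<in> S t'. lam i s t \<noteq> 0}.
                    scale (lam i s t) ((\<phi> ^^ (t' - 1)) (v t)))))))"
proof -
  have lin: "Vector_Spaces.linear scale scale \<phi>" using fp unfolding finite_potent_def by simp
  interpret J: jb scale \<phi> r S v
    using vs lin disj vker inj indep spans by (intro jb.intro jb_axioms.intro) auto
  interpret VP: vector_space_pair scale scale by (intro vector_space_pair.intro vs)
  have vB: "(\<phi> ^^ j) (v s) \<in> J.B" if "h \<in> {1..r}" "s \<in> S h" "j < h" for h s j
    unfolding J.B_def using that by blast
  have vUU: "(\<phi> ^^ j) (v s) \<in> U_part \<phi>" if "h \<in> {1..r}" "s \<in> S h" "j < h" for h s j
    using vB[OF that] J.U_eq J.span_base by auto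
  have part1: "endo_on scale (U_part \<phi>) g \<Longrightarrow>
       (gen_inverse_on (U_part \<phi>) \<phi> g \<longleftrightarrow>
        (\<exists>(v' :: 'i \<Rightarrow> 'v) (lam :: nat \<Rightarrow> 'i \<Rightarrow> 'i \<Rightarrow> 'a).
           (\<forall>h\<in>{1..r}. \<forall>s\<in>S h. v' s \<in> U_part \<phi>) \<and>
           (\<forall>h\<in>{1..r}. \<forall>s\<in>S h. \<forall>i\<in>{1..h-1}.
              finite {t \<in> (\<Union>h'\<in>{1..r}. S h'). lam i s t \<noteq> 0}) \<and>
           (\<forall>h\<in>{1..r}. \<forall>s\<in>S h.
              g (v s) = v' s \<and>
              (\<forall>i\<in>{1..h-1}. g ((\<phi> ^^ i) (v s)) =
                 (\<phi> ^^ (i - 1)) (v s) +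
                 (\<Sum>t'\<in>{1..r}. \<Sum>t\<in>{t \<in> S t'. lam i s t \<noteq> 0}.
                    scale (lam i s t) ((\<phi> ^^ (t' - 1)) (v t)))))))" for g
  proof -
    assume e: "endo_on scale (U_part \<phi>) g"
    have gU: "g x \<in> U_part \<phi>" if "x \<in> U_part \<phi>" for x using e that unfolding endo_on_def by auto
    show ?thesis
    proof
      assume gi: "gen_inverse_on (U_part \<phi>) \<phi> g"
      have "\<forall>p. \<exists>c. (\<exists>h\<in>{1..r}. snd p \<in> S h \<and> fst p \<in> {1..h-1}) \<longrightarrow>
          finite {t \<in> (\<Union>h'\<in>{1..r}. S h'). c t \<noteq> 0} \<and>
          g ((\<phi> ^^ fst p) (v (snd p))) = (\<phi> ^^ (fst p - 1)) (v (snd p)) +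
                 (\<Sum>t'\<in>{1..r}. \<Sum>t\<in>{t \<in> S t'. c t \<noteq> 0}.
                    scale (c t) ((\<phi> ^^ (t' - 1)) (v t)))"
      (is "\<forall>p. \<exists>c. ?Q p c")
      proof
        fix p :: "nat \<times> 'i"
        obtain i s where p: "p = (i, s)" by force
        show "\<exists>c. (\<exists>h\<in>{1..r}. snd p \<in> S h \<and> fst p \<in> {1..h-1}) \<longrightarrow>
          finite {t \<in> (\<Union>h'\<in>{1..r}. S h'). c t \<noteq> 0} \<and>
          g ((\<phi> ^^ fst p) (v (snd p))) = (\<phi> ^^ (fst p - 1)) (v (snd p)) +
                 (\<Sum>t'\<in>{1..r}. \<Sum>t\<in>{t \<in> S t'. c t \<noteq> 0}.
                    scale (c t) ((\<phi> ^^ (t' - 1)) (v t)))"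
        proof (cases "\<exists>h\<in>{1..r}. s \<in> S h \<and> i \<in> {1..h-1}")
          case False then show ?thesis using p by auto
        next
          case True
          then obtain h where h: "h \<in> {1..r}" "s \<in> S h" "i \<in> {1..h-1}" by blast
          define u where "u = g ((\<phi> ^^ i) (v s)) - (\<phi> ^^ (i - 1)) (v s)"
          have a1: "(\<phi> ^^ i) (v s) \<in> U_part \<phi>" "(\<phi> ^^ (i - 1)) (v s) \<in> U_part \<phi>"
            using vUU[OF h(1,2)] h(3) by auto
          then have "u \<in> J.span J.B" using gU J.U_eq J.span_diff unfolding u_def by auto
          moreover have "\<phi> u = 0"
          proof -
            have si: "Suc (i - 1) = i" using h by auto
            have B1: "\<phi> ((\<phi> ^^ (i - 1)) (v s)) = (\<phi> ^^ i) (v s)" using si J.phi_pow by metis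
            then have A1: "\<phi> (g ((\<phi> ^^ i) (v s))) = (\<phi> ^^ i) (v s)"
              using gi a1(2) unfolding gen_inverse_on_def by metis
            show ?thesis unfolding u_def J.L.diff A1 B1 by simp
          qed
          ultimately have "u \<in> J.span J.K" using J.ker_span by blast
          then obtain c where c: "finite {t \<in> (\<Union>h'\<in>{1..r}. S h'). c t \<noteq> 0}"
            "u = (\<Sum>t'\<in>{1..r}. \<Sum>t\<in>{t \<in> S t'. c t \<noteq> 0}. scale (c t) ((\<phi> ^^ (t' - 1)) (v t)))"
            using J.rep by blast
          have "g ((\<phi> ^^ i) (v s)) = (\<phi> ^^ (i - 1)) (v s) + u" unfolding u_def by simp
          then show ?thesis using c p by auto
        qed
      qed
      from choice[OF this] obtain F where F: "\<forall>p. (\<exists>h\<in>{1..r}. snd p \<in> S h \<and> fst p \<in> {1..h-1}) \<longrightarrow>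
          finite {t \<in> (\<Union>h'\<in>{1..r}. S h'). F p t \<noteq> 0} \<and>
          g ((\<phi> ^^ fst p) (v (snd p))) = (\<phi> ^^ (fst p - 1)) (v (snd p)) +
                 (\<Sum>t'\<in>{1..r}. \<Sum>t\<in>{t \<in> S t'. F p t \<noteq> 0}.
                    scale (F p t) ((\<phi> ^^ (t' - 1)) (v t)))" ..
      define lam where "lam i s = F (i, s)" for i s
      have F2: "finite {t \<in> (\<Union>h'\<in>{1..r}. S h'). lam i s t \<noteq> 0} \<and>
          g ((\<phi> ^^ i) (v s)) = (\<phi> ^^ (i - 1)) (v s) +
                 (\<Sum>t'\<in>{1..r}. \<Sum>t\<in>{t \<in> S t'. lam i s t \<noteq> 0}.
                    scale (lam i s t) ((\<phi> ^^ (t' - 1)) (v t)))"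
        if "h \<in> {1..r}" "s \<in> S h" "i \<in> {1..h-1}" for h s i
      proof -
        have "\<exists>h\<in>{1..r}. snd (i, s) \<in> S h \<and> fst (i, s) \<in> {1..h-1}" using that by auto
        from F[rule_format, OF this] show ?thesis unfolding lam_def by simp
      qed
      have "\<forall>h\<in>{1..r}. \<forall>s\<in>S h. g (v s) \<in> U_part \<phi>"
        using vUU[of _ _ 0] gU by auto
      then show "\<exists>(v' :: 'i \<Rightarrow> 'v) (lam :: nat \<Rightarrow> 'i \<Rightarrow> 'i \<Rightarrow> 'a).
           (\<forall>h\<in>{1..r}. \<forall>s\<in>S h. v' s \<in> U_part \<phi>) \<and>
           (\<forall>h\<in>{1..r}. \<forall>s\<in>S h. \<forall>i\<in>{1..h-1}.
              finite {t \<in> (\<Union>h'\<in>{1..r}. S h'). lam i s t \<noteq> 0}) \<and>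
           (\<forall>h\<in>{1..r}. \<forall>s\<in>S h.
              g (v s) = v' s \<and>
              (\<forall>i\<in>{1..h-1}. g ((\<phi> ^^ i) (v s)) =
                 (\<phi> ^^ (i - 1)) (v s) +
                 (\<Sum>t'\<in>{1..r}. \<Sum>t\<in>{t \<in> S t'. lam i s t \<noteq> 0}.
                    scale (lam i s t) ((\<phi> ^^ (t' - 1)) (v t)))))"
        using F2 by (intro exI[of _ "\<lambda>s. g (v s)"] exI[of _ lam]) blast
    next
      assume "\<exists>(v' :: 'i \<Rightarrow> 'v) (lam :: nat \<Rightarrow> 'i \<Rightarrow> 'i \<Rightarrow> 'a).
           (\<forall>h\<in>{1..r}. \<forall>s\<in>S h. v' s \<in> U_part \<phi>) \<and>
           (\<forall>h\<in>{1..r}. \<forall>s\<in>S h. \<forall>i\<in>{1..h-1}.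
              finite {t \<in> (\<Union>h'\<in>{1..r}. S h'). lam i s t \<noteq> 0}) \<and>
           (\<forall>h\<in>{1..r}. \<forall>s\<in>S h.
              g (v s) = v' s \<and>
              (\<forall>i\<in>{1..h-1}. g ((\<phi> ^^ i) (v s)) =
                 (\<phi> ^^ (i - 1)) (v s) +
                 (\<Sum>t'\<in>{1..r}. \<Sum>t\<in>{t \<in> S t'. lam i s t \<noteq> 0}.
                    scale (lam i s t) ((\<phi> ^^ (t' - 1)) (v t)))))"
      then obtain lam :: "nat \<Rightarrow> 'i \<Rightarrow> 'i \<Rightarrow> 'a" where
        "\<forall>h\<in>{1..r}. \<forall>s\<in>S h. \<forall>i\<in>{1..h-1}. g ((\<phi> ^^ i) (v s)) =
                 (\<phi> ^^ (i - 1)) (v s) +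
                 (\<Sum>t'\<in>{1..r}. \<Sum>t\<in>{t \<in> S t'. lam i s t \<noteq> 0}.
                    scale (lam i s t) ((\<phi> ^^ (t' - 1)) (v t)))" by blast
      then show "gen_inverse_on (U_part \<phi>) \<phi> g" using J.geninv[OF e] by blast
    qed
  qed
  have part2: "\<exists>g. endo_on scale (U_part \<phi>) g \<and> gen_inverse_on (U_part \<phi>) \<phi> g \<and>
           (\<forall>h\<in>{1..r}. \<forall>s\<in>S h.
              g (v s) = v' s \<and>
              (\<forall>i\<in>{1..h-1}. g ((\<phi> ^^ i) (v s)) =
                 (\<phi> ^^ (i - 1)) (v s) +
                 (\<Sum>t'\<in>{1..r}. \<Sum>t\<in>{t \<in> S t'. lam i s t \<noteq> 0}.
                    scale (lam i s t) ((\<phi> ^^ (t' - 1)) (v t)))))"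
    if v'U: "\<forall>h\<in>{1..r}. \<forall>s\<in>S h. v' s \<in> U_part \<phi>" for v' :: "'i \<Rightarrow> 'v" and lam :: "nat \<Rightarrow> 'i \<Rightarrow> 'i \<Rightarrow> 'a"
  proof -
    define P where "P = {(s, j). \<exists>h\<in>{1..r}. s \<in> S h \<and> j < h}"
    define E where "E = (\<lambda>(s, j). (\<phi> ^^ j) (v s))"
    have BE: "J.B = E ` P" unfolding J.B_def E_def P_def by auto
    define val where "val s j = (if j = 0 then v' s else (\<phi> ^^ (j - 1)) (v s) +
                 (\<Sum>t'\<in>{1..r}. \<Sum>t\<in>{t \<in> S t'. lam j s t \<noteq> 0}.
                    scale (lam j s t) ((\<phi> ^^ (t' - 1)) (v t))))" for s j
    define fv where "fv b = (case inv_into P E b of (s, j) \<Rightarrow> val s j)" for b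
    define g where "g = VP.construct J.B fv"
    have indB: "J.independent J.B" using indep unfolding J.B_def by simp
    have injE: "inj_on E P" using inj unfolding E_def P_def .
    have gval: "g ((\<phi> ^^ j) (v s)) = val s j" if "h \<in> {1..r}" "s \<in> S h" "j < h" for h s j
    proof -
      have sP: "(s, j) \<in> P" unfolding P_def using that by blast
      have "(\<phi> ^^ j) (v s) = E (s, j)" unfolding E_def by simp
      moreover have "g (E (s, j)) = fv (E (s, j))" unfolding g_def
        using VP.construct_basis[OF indB] BE sP by auto
      moreover have "fv (E (s, j)) = val s j" unfolding fv_def using inv_into_f_f[OF injE sP] by simp
      ultimately show ?thesis by simp
    qed
    have glin: "Vector_Spaces.linear scale scale g" unfolding g_def by (rule VP.linear_construct[OF indB])
    have fvU: "fv ` J.B \<subseteq> J.span J.B"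
    proof
      fix y assume "y \<in> fv ` J.B"
      then obtain s j where sj: "(s, j) \<in> P" "y = fv (E (s, j))" using BE by auto
      then have y: "y = val s j" unfolding fv_def using inv_into_f_f[OF injE sj(1)] by simp
      obtain h where h: "h \<in> {1..r}" "s \<in> S h" "j < h" using sj unfolding P_def by auto
      have sum_in: "(\<Sum>t'\<in>{1..r}. \<Sum>t\<in>{t \<in> S t'. lam j s t \<noteq> 0}.
                    scale (lam j s t) ((\<phi> ^^ (t' - 1)) (v t))) \<in> J.span J.B"
        by (intro J.span_sum J.span_scale J.span_base vB) auto
      show "y \<in> J.span J.B"
      proof (cases "j = 0")
        case True then show ?thesis using y v'U h J.U_eq unfolding val_def by auto
      next
        case False
        then have "(\<phi> ^^ (j - 1)) (v s) \<in> J.span J.B" using vB[OF h(1,2), of "j - 1"] J.span_base h by auto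
        then show ?thesis using y False sum_in J.span_add unfolding val_def by auto
      qed
    qed
    have e: "endo_on scale (U_part \<phi>) g"
      unfolding endo_on_def
    proof (intro conjI ballI allI)
      show "g ` U_part \<phi> \<subseteq> U_part \<phi>"
      proof
        fix y assume "y \<in> g ` U_part \<phi>"
        then obtain x where "y = g x" by auto
        then have "y \<in> J.span (fv ` J.B)" unfolding g_def using VP.construct_in_span[OF indB] by auto
        then show "y \<in> U_part \<phi>" using J.span_mono[OF fvU] J.span_span J.U_eq by auto
      qed
      show "g (x + y) = g x + g y" for x y by (rule VP.linear_add[OF glin])
      show "g (scale c x) = scale c (g x)" for c x by (rule VP.linear_scale[OF glin])
    qed
    have form: "\<forall>h\<in>{1..r}. \<forall>s\<in>S h.
              g (v s) = v' s \<and>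
              (\<forall>i\<in>{1..h-1}. g ((\<phi> ^^ i) (v s)) =
                 (\<phi> ^^ (i - 1)) (v s) +
                 (\<Sum>t'\<in>{1..r}. \<Sum>t\<in>{t \<in> S t'. lam i s t \<noteq> 0}.
                    scale (lam i s t) ((\<phi> ^^ (t' - 1)) (v t))))"
    proof (intro ballI conjI)
      fix h s assume h: "h \<in> {1..r}" "s \<in> S h"
      show "g (v s) = v' s" using gval[OF h, of 0] h unfolding val_def by auto
      fix i assume i: "i \<in> {1..h-1}"
      show "g ((\<phi> ^^ i) (v s)) = (\<phi> ^^ (i - 1)) (v s) +
                 (\<Sum>t'\<in>{1..r}. \<Sum>t\<in>{t \<in> S t'. lam i s t \<noteq> 0}.
                    scale (lam i s t) ((\<phi> ^^ (t' - 1)) (v t)))"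
        using gval[OF h, of i] i unfolding val_def by auto
    qed
    then have "gen_inverse_on (U_part \<phi>) \<phi> g" using J.geninv[OF e] by blast
    then show ?thesis using e form by blast
  qed
  show ?thesis using part1 part2 by blast
qed

end
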